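(* Let $k\ge2$ be a constant. For TSP (on an undirected graph) or ATSP (on a directed graph) with $m$ edges, whose edge weights $w_e$ are drawn independently from distributions with densities $f_e:[0,1]\to[0,\phi]$, the expected maximum number of iterations of local search under the $k$-Opt neighbourhood (over all initial tours and all sequences of improving moves) is $O(4^{k^2}m^{k+2}\phi)$, where the hidden constant is absolute.
   Context: TSP/$k$-Opt: given a weighted undirected graph, a tour is a Hamiltonian cycle, its cost is the sum of its edge weights; the $k$-Opt neighbours of a tour are all tours obtained by removing some $r\in\{2,\dots,k\}$ edges of it and adding $r$ other edges of the graph. A solution is a tour with no neighbour of strictly smaller cost; local search repeatedly moves to a strictly cheaper neighbour. ATSP/$k$-Opt is the analogue on a weighted directed graph, with directed Hamiltonian cycles as tours and neighbours obtained by replacing at most $k$ arcs. An initial tour is assumed to be given. *)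

theory Defs
  imports "HOL-Analysis.Analysis"
begin

text \<open>Tours are represented by their edge sets. Vertices are natural numbers.\<close>

definition tsp_tours :: "nat set \<Rightarrow> nat set set \<Rightarrow> nat set set set" where
  "tsp_tours V E = {T. T \<subseteq> E \<and> (\<exists>vs. distinct vs \<and> set vs = V \<and> length vs \<ge> 3 \<and>
      T = {{vs ! i, vs ! (Suc i mod length vs)} | i. i < length vs})}"

definition atsp_tours :: "nat set \<Rightarrow> (nat \<times> nat) set \<Rightarrow> (nat \<times> nat) set set" where
  "atsp_tours V A = {T. T \<subseteq> A \<and> (\<exists>vs. distinct vs \<and> set vs = V \<and> length vs \<ge> 2 \<and>
      T = {(vs ! i, vs ! (Suc i mod length vs)) | i. i < length vs})}"

definition tour_cost :: "('e \<Rightarrow> real) \<Rightarrow> 'e set \<Rightarrow> real" where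
  "tour_cost w T = (\<Sum>e\<in>T. w e)"

definition kopt_neighbour :: "'e set set \<Rightarrow> nat \<Rightarrow> 'e set \<Rightarrow> 'e set \<Rightarrow> bool" where
  "kopt_neighbour tours k T T' \<longleftrightarrow> T \<in> tours \<and> T' \<in> tours \<and>
     (\<exists>r\<in>{2..k}. card (T - T') = r \<and> card (T' - T) = r)"

definition improving_seq :: "'e set set \<Rightarrow> nat \<Rightarrow> ('e \<Rightarrow> real) \<Rightarrow> 'e set list \<Rightarrow> bool" where
  "improving_seq tours k w ts \<longleftrightarrow> ts \<noteq> [] \<and> (\<forall>T\<in>set ts. T \<in> tours) \<and>
     (\<forall>i. Suc i < length ts \<longrightarrow> kopt_neighbour tours k (ts ! i) (ts ! Suc i) \<and>
                              tour_cost w (ts ! Suc i) < tour_cost w (ts ! i))"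

definition max_iterations :: "'e set set \<Rightarrow> nat \<Rightarrow> ('e \<Rightarrow> real) \<Rightarrow> ennreal" where
  "max_iterations tours k w = (SUP ts \<in> {ts. improving_seq tours k w ts}. of_nat (length ts - 1))"

definition bounded_density :: "real \<Rightarrow> (real \<Rightarrow> real) \<Rightarrow> bool" where
  "bounded_density \<phi> f \<longleftrightarrow> f \<in> borel_measurable lborel \<and>
     (\<forall>x. 0 \<le> f x \<and> f x \<le> \<phi>) \<and> (\<forall>x. x \<notin> {0..1} \<longrightarrow> f x = 0) \<and>
     (\<integral>\<^sup>+ x. ennreal (f x) \<partial>lborel) = 1"

definition weight_measure :: "'e set \<Rightarrow> ('e \<Rightarrow> real \<Rightarrow> real) \<Rightarrow> ('e \<Rightarrow> real) measure" where
  "weight_measure E f = (\<Pi>\<^sub>M e\<in>E. density lborel (\<lambda>x. ennreal (f e x)))"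

end

theory Submission
  imports Defs "HOL-Probability.Probability"
begin


lemma bd_prob:
  assumes "bounded_density \<phi> g"
  shows "prob_space (density lborel (\<lambda>x. ennreal (g x)))"
proof (rule prob_spaceI)
  have "emeasure (density lborel (\<lambda>x. ennreal (g x))) UNIV = (\<integral>\<^sup>+ x. ennreal (g x) \<partial>lborel)"
    by (subst emeasure_density) (use assms in \<open>auto simp: bounded_density_def\<close>)
  then show "emeasure (density lborel (\<lambda>x. ennreal (g x))) (space (density lborel (\<lambda>x. ennreal (g x)))) = 1"
    using assms by (simp add: bounded_density_def)
qed

lemma bd_interval:
  assumes "bounded_density \<phi> g" "\<epsilon> \<ge> 0"
  shows "(\<integral>\<^sup>+ y. indicator {a<..a+\<epsilon>} y \<partial>density lborel (\<lambda>x. ennreal (g x))) \<le> ennreal (\<phi> * \<epsilon>)"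
proof -
  have gm: "g \<in> borel_measurable lborel" using assms by (simp add: bounded_density_def)
  have "(\<integral>\<^sup>+ y. indicator {a<..a+\<epsilon>} y \<partial>density lborel (\<lambda>x. ennreal (g x)))
      = (\<integral>\<^sup>+ y. ennreal (g y) * indicator {a<..a+\<epsilon>} y \<partial>lborel)"
    by (subst nn_integral_density) (use gm in auto)
  also have "\<dots> \<le> (\<integral>\<^sup>+ y. ennreal \<phi> * indicator {a<..a+\<epsilon>} y \<partial>lborel)"
    using assms by (intro nn_integral_mono) (auto simp: bounded_density_def split: split_indicator intro: ennreal_leI)
  also have "\<dots> = ennreal \<phi> * ennreal \<epsilon>"
    using assms by (subst nn_integral_cmult_indicator) auto
  also have "\<dots> = ennreal (\<phi> * \<epsilon>)"
  proof -
    have "0 \<le> \<phi>" using assms unfolding bounded_density_def by (meson order_trans)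
    then show ?thesis using assms by (simp add: ennreal_mult)
  qed
  finally show ?thesis .
qed

lemma weight_measure_alt:
  assumes "\<forall>e\<in>E. bounded_density \<phi> (f e)"
  defines "M' \<equiv> (\<lambda>e. if e \<in> E then density lborel (\<lambda>x. ennreal (f e x)) else return lborel 0)"
  shows "weight_measure E f = PiM E M'" "product_prob_space M'"
proof -
  show "weight_measure E f = PiM E M'"
    unfolding weight_measure_def M'_def by (rule PiM_cong) auto
  show "product_prob_space M'"
    unfolding product_prob_space_def product_sigma_finite_def product_prob_space_axioms_def
    using assms by (auto simp: M'_def bd_prob prob_space_return prob_space_imp_sigma_finite)
qed

lemma coord_interval:
  assumes E: "finite E" "i \<in> E" and dens: "\<forall>e\<in>E. bounded_density \<phi> (f e)"
    and hm: "h \<in> borel_measurable (weight_measure E f)"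
    and hi: "\<And>x y. h (x(i:=y)) = h x" and eps: "\<epsilon> \<ge> 0"
  shows "emeasure (weight_measure E f) {w \<in> space (weight_measure E f). 0 < w i + h w \<and> w i + h w \<le> \<epsilon>}
     \<le> ennreal (\<phi> * \<epsilon>)"
proof -
  define M' where "M' = (\<lambda>e. if e \<in> E then density lborel (\<lambda>x. ennreal (f e x)) else return lborel 0)"
  have WM: "weight_measure E f = PiM E M'" and pp: "product_prob_space M'"
    using weight_measure_alt[OF dens] by (auto simp: M'_def)
  interpret product_prob_space M' by (rule pp)
  define I where "I = E - {i}"
  have EI: "E = insert i I" "i \<notin> I" "finite I" using E by (auto simp: I_def)
  define S where "S = {w \<in> space (PiM E M'). 0 < w i + h w \<and> w i + h w \<le> \<epsilon>}"
  have hm': "h \<in> borel_measurable (PiM E M')" using hm WM by simp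
  have ci: "(\<lambda>w. w i) \<in> borel_measurable (PiM E M')"
  proof -
    have "(\<lambda>w. w i) \<in> measurable (PiM E M') (M' i)" using E by measurable
    moreover have "sets (M' i) = sets borel" using E by (simp add: M'_def)
    ultimately show ?thesis using measurable_cong_sets by blast
  qed
  have Ssets: "S \<in> sets (PiM E M')"
    unfolding S_def using hm' ci by measurable
  have "emeasure (PiM E M') S = (\<integral>\<^sup>+ w. indicator S w \<partial>PiM E M')"
    using Ssets by simp
  also have "\<dots> = (\<integral>\<^sup>+ x. (\<integral>\<^sup>+ y. indicator S (x(i := y)) \<partial>(M' i)) \<partial>(PiM I M'))"
    using EI Ssets unfolding EI(1) by (intro product_nn_integral_insert) (auto simp: EI(1))
  also have "\<dots> \<le> (\<integral>\<^sup>+ x. ennreal (\<phi> * \<epsilon>) \<partial>(PiM I M'))"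
  proof (rule nn_integral_mono)
    fix x assume x: "x \<in> space (PiM I M')"
    have "(\<integral>\<^sup>+ y. indicator S (x(i := y)) \<partial>(M' i))
        = (\<integral>\<^sup>+ y. indicator {- h x<..- h x+\<epsilon>} y \<partial>density lborel (\<lambda>z. ennreal (f i z)))"
    proof -
      have "x(i := y) \<in> space (PiM E M')" for y
        using x EI unfolding space_PiM by (auto simp: M'_def PiE_def Pi_def extensional_def)
      then have eq: "\<And>y. indicator S (x(i:=y)) = (indicator {- h x<..- h x+\<epsilon>} y :: ennreal)"
        by (auto simp: S_def hi split: split_indicator)
      have Mi: "M' i = density lborel (\<lambda>z. ennreal (f i z))" using E by (simp add: M'_def)
      show ?thesis by (simp only: eq Mi)
    qed
    also have "\<dots> \<le> ennreal (\<phi> * \<epsilon>)"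
      using dens E eps by (intro bd_interval) auto
    finally show "(\<integral>\<^sup>+ y. indicator S (x(i := y)) \<partial>(M' i)) \<le> ennreal (\<phi> * \<epsilon>)" .
  qed
  also have "\<dots> = ennreal (\<phi> * \<epsilon>)"
  proof -
    have "prob_space (PiM I M')" by (rule prob_space_PiM) (use dens in \<open>auto simp: M'_def bd_prob prob_space_return\<close>)
    then show ?thesis by (simp add: prob_space.emeasure_space_1)
  qed
  finally show ?thesis using WM S_def by simp
qed

lemma comp_meas:
  fixes f :: "'e \<Rightarrow> real \<Rightarrow> real" and E :: "'e set"
  assumes "e \<in> E"
  shows "(\<lambda>w. w e) \<in> borel_measurable (weight_measure E f)"
proof -
  have "(\<lambda>w. w e) \<in> measurable (weight_measure E f) (density lborel (\<lambda>x. ennreal (f e x)))"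
    unfolding weight_measure_def using assms by measurable
  then show ?thesis using measurable_cong_sets by (metis sets_density sets_lborel)
qed

lemma sum_meas:
  fixes f :: "'e \<Rightarrow> real \<Rightarrow> real" and Z E :: "'e set"
  assumes "Z \<subseteq> E"
  shows "(\<lambda>w. \<Sum>e\<in>Z. w e) \<in> borel_measurable (weight_measure E f)"
  by (intro borel_measurable_sum comp_meas) (use assms in auto)

definition Lf :: "'e set \<Rightarrow> 'e set \<Rightarrow> ('e \<Rightarrow> real) \<Rightarrow> real" where
  "Lf X Y w = (\<Sum>e\<in>X. w e) - (\<Sum>e\<in>Y. w e)"

lemma Lf_meas:
  fixes f :: "'e \<Rightarrow> real \<Rightarrow> real" and X Y E :: "'e set"
  assumes "X \<subseteq> E" "Y \<subseteq> E"
  shows "Lf X Y \<in> borel_measurable (weight_measure E f)"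
  unfolding Lf_def[abs_def] using sum_meas[OF assms(1)] sum_meas[OF assms(2)] by measurable

lemma move_prob:
  fixes f :: "'e \<Rightarrow> real \<Rightarrow> real" and X Y E :: "'e set"
  assumes E: "finite E" and dens: "\<forall>e\<in>E. bounded_density \<phi> (f e)"
    and XY: "X \<subseteq> E" "Y \<subseteq> E" "X \<noteq> {}" "X \<inter> Y = {}" and eps: "\<epsilon> \<ge> 0"
  shows "emeasure (weight_measure E f) {w \<in> space (weight_measure E f). 0 < Lf X Y w \<and> Lf X Y w \<le> \<epsilon>}
     \<le> ennreal (\<phi> * \<epsilon>)"
proof -
  obtain i where i: "i \<in> X" using XY by auto
  have fX: "finite X" "finite Y" using XY(1,2) E finite_subset by blast+
  define h where "h = (\<lambda>w::'e\<Rightarrow>real. (\<Sum>e\<in>X-{i}. w e) - (\<Sum>e\<in>Y. w e))"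
  have Lh: "Lf X Y w = w i + h w" for w
    unfolding Lf_def h_def using fX i by (simp add: sum.remove)
  have iY: "i \<notin> Y" using i XY by auto
  have hi: "h (x(i:=y)) = h x" for x y
    unfolding h_def using iY by (auto intro!: sum.cong arg_cong2[where f="(-)"])
  have hm: "h \<in> borel_measurable (weight_measure E f)"
  proof -
    have m1: "(\<lambda>w. \<Sum>e\<in>X-{i}. w e) \<in> borel_measurable (weight_measure E f)"
      by (rule sum_meas) (use XY in auto)
    have m2: "(\<lambda>w. \<Sum>e\<in>Y. w e) \<in> borel_measurable (weight_measure E f)"
      by (rule sum_meas) (use XY in auto)
    show ?thesis unfolding h_def using m1 m2 by (rule borel_measurable_diff)
  qed
  show ?thesis unfolding Lh
    using coord_interval[OF E _ dens hm hi eps] i XY by auto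
qed

lemma harm_pow2: "(\<Sum>t\<in>{1..(2::nat)^m}. 1 / real t) \<le> 1 + real m"
proof (induction m)
  case 0 then show ?case by simp
next
  case (Suc m)
  have split: "{1..(2::nat)^Suc m} = {1..2^m} \<union> {2^m+1..2^Suc m}" by auto
  have "(\<Sum>t\<in>{(2::nat)^m+1..2^Suc m}. 1 / real t) \<le> of_nat (card {(2::nat)^m+1..2^Suc m}) * (1 / 2^m)"
    by (rule sum_bounded_above) (auto simp: field_simps)
  also have "\<dots> = 1" by simp
  finally have "(\<Sum>t\<in>{(2::nat)^m+1..2^Suc m}. 1 / real t) \<le> 1" .
  moreover have "(\<Sum>t\<in>{1..(2::nat)^Suc m}. 1 / real t) = (\<Sum>t\<in>{1..(2::nat)^m}. 1 / real t) + (\<Sum>t\<in>{(2::nat)^m+1..2^Suc m}. 1 / real t)"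
    unfolding split by (rule sum.union_disjoint) auto
  ultimately show ?case using Suc by simp
qed

lemma cost_diff:
  assumes "finite T" "finite T'"
  shows "tour_cost w T - tour_cost w T' = Lf (T-T') (T'-T) w"
proof -
  have "tour_cost w T = (\<Sum>e\<in>T\<inter>T'. w e) + (\<Sum>e\<in>T-T'. w e)"
    unfolding tour_cost_def using assms by (simp add: sum.Int_Diff)
  moreover have "tour_cost w T' = (\<Sum>e\<in>T'\<inter>T. w e) + (\<Sum>e\<in>T'-T. w e)"
    unfolding tour_cost_def using assms by (simp add: sum.Int_Diff)
  ultimately show ?thesis unfolding Lf_def by (simp add: Int_commute)
qed

lemma chain_decr:
  assumes "improving_seq Tours k w ts" "i < j" "j < length ts"
  shows "tour_cost w (ts!j) < tour_cost w (ts!i)"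
  using assms(2,3)
proof (induction j)
  case 0 then show ?case by simp
next
  case (Suc j)
  have step: "tour_cost w (ts!Suc j) < tour_cost w (ts!j)"
    using assms(1) Suc.prems unfolding improving_seq_def by blast
  show ?case
  proof (cases "i = j")
    case True then show ?thesis using step by simp
  next
    case False then show ?thesis using Suc step by simp
  qed
qed

lemma seq_len:
  assumes "improving_seq Tours k w ts" "Tours \<subseteq> Pow E" "finite E"
  shows "length ts \<le> 2 ^ card E"
proof -
  have "distinct ts"
    unfolding distinct_conv_nth
  proof (intro allI impI)
    fix i j assume "i < length ts" "j < length ts" "i \<noteq> j"
    then show "ts ! i \<noteq> ts ! j"
      using chain_decr[OF assms(1), of i j] chain_decr[OF assms(1), of j i]
      by (cases "i < j") auto
  qed
  then have "length ts = card (set ts)" by (simp add: distinct_card)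
  also have "\<dots> \<le> card (Pow E)"
    using assms unfolding improving_seq_def by (intro card_mono) auto
  also have "\<dots> = 2 ^ card E" using assms(3) by (simp add: card_Pow)
  finally show ?thesis .
qed

lemma small_step:
  assumes seq: "improving_seq Tours k w ts"
    and cb: "\<forall>T\<in>Tours. 0 \<le> tour_cost w T \<and> tour_cost w T \<le> c"
    and t: "1 \<le> t" "t \<le> length ts - 1"
  shows "\<exists>i. Suc i < length ts \<and> tour_cost w (ts!i) - tour_cost w (ts!Suc i) \<le> c / real t"
proof (rule ccontr)
  assume "\<not> ?thesis"
  then have big: "\<And>i. i < length ts - 1 \<Longrightarrow> c / real t < tour_cost w (ts!i) - tour_cost w (ts!Suc i)"
    by (metis less_diff_conv not_less Suc_eq_plus1)
  define L where "L = length ts - 1"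
  have L1: "L \<ge> 1" using t L_def by simp
  have "(\<Sum>i<L. c / real t) < (\<Sum>i<L. tour_cost w (ts!i) - tour_cost w (ts!Suc i))"
    using L1 big by (intro sum_strict_mono) (auto simp: L_def lessThan_empty_iff)
  also have "\<dots> = tour_cost w (ts!0) - tour_cost w (ts!L)"
    by (rule sum_lessThan_telescope')
  also have "\<dots> \<le> c"
  proof -
    have "ts ! 0 \<in> Tours" "ts ! L \<in> Tours" using seq L1 unfolding improving_seq_def L_def
      by (auto intro!: nth_mem)
    then have "tour_cost w (ts!0) \<le> c" "0 \<le> tour_cost w (ts!L)" using cb by blast+
    then show ?thesis by linarith
  qed
  finally have lt: "real L * (c / real t) < c" by simp
  have c0: "c \<ge> 0"
  proof -
    have "ts ! 0 \<in> Tours" using seq unfolding improving_seq_def by auto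
    then show ?thesis using cb by force
  qed
  have "c \<le> real L * (c / real t)"
  proof -
    have "real t \<le> real L" using t L_def by simp
    then have "c * real t \<le> c * real L" using c0 by (intro mult_left_mono) auto
    then show ?thesis using t by (simp add: field_simps)
  qed
  then show False using lt by simp
qed

lemma card_Xs:
  assumes E: "finite E"
  shows "card {X. X \<subseteq> E \<and> X \<noteq> {} \<and> card X \<le> k} \<le> k * card E ^ k"
proof -
  let ?S = "\<lambda>r. {X. X \<subseteq> E \<and> card X = r}"
  have sub: "{X. X \<subseteq> E \<and> X \<noteq> {} \<and> card X \<le> k} \<subseteq> (\<Union>r\<in>{1..k}. ?S r)"
  proof
    fix X assume "X \<in> {X. X \<subseteq> E \<and> X \<noteq> {} \<and> card X \<le> k}"
    then have "X \<subseteq> E" "X \<noteq> {}" "card X \<le> k" by auto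
    moreover have "finite X" using \<open>X \<subseteq> E\<close> E finite_subset by blast
    ultimately have "card X \<in> {1..k}" by (simp add: Suc_le_eq card_gt_0_iff)
    then show "X \<in> (\<Union>r\<in>{1..k}. ?S r)" using \<open>X \<subseteq> E\<close> by blast
  qed
  have fin: "finite (\<Union>r\<in>{1..k}. ?S r)"
    by (rule finite_UN_I) (use E in \<open>auto intro: finite_subset[of _ "Pow E"]\<close>)
  have "card {X. X \<subseteq> E \<and> X \<noteq> {} \<and> card X \<le> k} \<le> card (\<Union>r\<in>{1..k}. ?S r)"
    by (rule card_mono[OF fin sub])
  also have "\<dots> \<le> (\<Sum>r\<in>{1..k}. card (?S r))" by (rule card_UN_le) simp
  also have "\<dots> = (\<Sum>r\<in>{1..k}. card E choose r)" using E by (simp add: n_subsets)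
  also have "\<dots> \<le> (\<Sum>r\<in>{1..k}. card E ^ k)"
  proof (rule sum_mono)
    fix r assume r: "r \<in> {1..k}"
    show "card E choose r \<le> card E ^ k"
    proof (cases "r \<le> card E")
      case True
      then have "card E choose r \<le> card E ^ r" by (rule binomial_le_pow)
      also have "\<dots> \<le> card E ^ k"
      proof (cases "card E = 0")
        case True then show ?thesis using r by (simp add: zero_power)
      next
        case False then show ?thesis using r by (intro power_increasing) auto
      qed
      finally show ?thesis .
    next
      case False then show ?thesis by (simp add: binomial_eq_0)
    qed
  qed
  also have "\<dots> = k * card E ^ k" by simp
  finally show ?thesis .
qed

definition Mv :: "'e set \<Rightarrow> nat \<Rightarrow> ('e set \<Rightarrow> 'e set) \<Rightarrow> ('e set \<times> 'e set) set" where
  "Mv E k R = {(X,Y). X \<subseteq> E \<and> X \<noteq> {} \<and> card X \<le> k \<and> Y \<subseteq> R X \<and> X \<inter> Y = {}}"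

lemma card_Mv:
  assumes E: "finite E" and RE: "\<And>X. X \<subseteq> E \<Longrightarrow> R X \<subseteq> E"
    and RB: "\<And>X. X \<subseteq> E \<Longrightarrow> card X \<le> k \<Longrightarrow> card (R X) \<le> B"
  shows "finite (Mv E k R)" "card (Mv E k R) \<le> k * card E ^ k * 2 ^ B"
proof -
  define Xs where "Xs = {X. X \<subseteq> E \<and> X \<noteq> {} \<and> card X \<le> k}"
  have finXs: "finite Xs" unfolding Xs_def by (rule finite_subset[of _ "Pow E"]) (use E in auto)
  have finR: "X \<in> Xs \<Longrightarrow> finite (Pow (R X))" for X
    using RE[of X] E finite_subset[of "R X" E] unfolding Xs_def by auto
  have sub: "Mv E k R \<subseteq> Sigma Xs (\<lambda>X. Pow (R X))"
    unfolding Mv_def Xs_def by auto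
  have finS: "finite (Sigma Xs (\<lambda>X. Pow (R X)))" using finXs finR by auto
  show "finite (Mv E k R)" using finite_subset[OF sub finS] .
  have "card (Mv E k R) \<le> card (Sigma Xs (\<lambda>X. Pow (R X)))" by (rule card_mono[OF finS sub])
  also have "\<dots> = (\<Sum>X\<in>Xs. card (Pow (R X)))" using finXs finR by (intro card_SigmaI) auto
  also have "\<dots> \<le> (\<Sum>X\<in>Xs. 2 ^ B)"
  proof (rule sum_mono)
    fix X assume X: "X \<in> Xs"
    have "finite (R X)" using finR[OF X] by simp
    then have "card (Pow (R X)) = 2 ^ card (R X)" by (simp add: card_Pow)
    also have "\<dots> \<le> 2 ^ B" using RB X unfolding Xs_def by (intro power_increasing) auto
    finally show "card (Pow (R X)) \<le> 2 ^ B" .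
  qed
  also have "\<dots> = card Xs * 2 ^ B" by simp
  also have "\<dots> \<le> k * card E ^ k * 2 ^ B" using card_Xs[OF E, of k] unfolding Xs_def by simp
  finally show "card (Mv E k R) \<le> k * card E ^ k * 2 ^ B" .
qed

lemma AE_good:
  fixes f :: "'e \<Rightarrow> real \<Rightarrow> real" and E :: "'e set"
  assumes E: "finite E" and dens: "\<forall>e\<in>E. bounded_density \<phi> (f e)"
  shows "AE w in weight_measure E f. \<forall>e\<in>E. 0 \<le> w e \<and> w e \<le> 1"
proof -
  define M' where "M' = (\<lambda>e. if e \<in> E then density lborel (\<lambda>x. ennreal (f e x)) else return lborel 0)"
  have WM: "weight_measure E f = PiM E M'"
    using weight_measure_alt[OF dens] by (auto simp: M'_def)
  have pr: "\<And>e. e \<in> E \<Longrightarrow> prob_space (M' e)"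
    using dens by (auto simp: M'_def bd_prob)
  have "AE w in PiM E M'. 0 \<le> w e \<and> w e \<le> 1" if e: "e \<in> E" for e
  proof (rule AE_PiM_component[OF pr e])
    have gm: "(\<lambda>x. ennreal (f e x)) \<in> borel_measurable lborel"
      using dens e by (simp add: bounded_density_def)
    have h: "AE x in lborel. 0 < ennreal (f e x) \<longrightarrow> 0 \<le> x \<and> x \<le> 1"
    proof (intro AE_I2 impI)
      fix x assume "0 < ennreal (f e x)"
      then have "f e x \<noteq> 0" by auto
      moreover have "\<forall>x. x \<notin> {0..1} \<longrightarrow> f e x = 0" using dens e by (simp add: bounded_density_def)
      ultimately show "0 \<le> x \<and> x \<le> 1" by force
    qed
    have Me: "M' e = density lborel (\<lambda>x. ennreal (f e x))" using e by (simp add: M'_def)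
    show "AE x in M' e. 0 \<le> x \<and> x \<le> 1"
      unfolding Me AE_density[OF gm] by (rule h)
  qed
  then show ?thesis unfolding WM using E by (intro AE_finite_allI) auto
qed

lemma generic:
  fixes E :: "'e set" and Tours :: "'e set set" and R :: "'e set \<Rightarrow> 'e set" and B :: nat
    and f :: "'e \<Rightarrow> real \<Rightarrow> real"
  assumes E: "finite E" and TE: "Tours \<subseteq> Pow E"
    and dens: "\<forall>e\<in>E. bounded_density \<phi> (f e)"
    and RE: "\<And>X. X \<subseteq> E \<Longrightarrow> R X \<subseteq> E"
    and RB: "\<And>X. X \<subseteq> E \<Longrightarrow> card X \<le> k \<Longrightarrow> card (R X) \<le> B"
    and RN: "\<And>T T'. kopt_neighbour Tours k T T' \<Longrightarrow> T' - T \<subseteq> R (T - T')"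
  shows "(\<integral>\<^sup>+ w. max_iterations Tours k w \<partial>weight_measure E f)
     \<le> ennreal (2 * real k * 2 ^ B * real (card E) ^ (k + 2) * \<phi>)"
proof (cases "E = {}")
  case True
  have "max_iterations Tours k w = 0" for w
    unfolding max_iterations_def
  proof (rule antisym[OF SUP_least], simp_all)
    fix ts assume seq: "improving_seq Tours k w ts"
    show "length ts \<le> Suc 0"
    proof (rule ccontr)
      assume "\<not> length ts \<le> Suc 0"
      then have "kopt_neighbour Tours k (ts!0) (ts!Suc 0)" using seq unfolding improving_seq_def by auto
      then obtain r where "r \<ge> 2" "card (ts!0 - ts!Suc 0) = r" "ts!0 \<in> Tours"
        unfolding kopt_neighbour_def by auto
      moreover have "ts!0 = {}" using \<open>ts!0 \<in> Tours\<close> TE True by auto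
      ultimately show False by simp
    qed
  qed
  then show ?thesis by simp
next
  case False
  let ?P = "weight_measure E f"
  define m where "m = card E"
  have m1: "m \<ge> 1" using False E by (simp add: m_def Suc_le_eq card_gt_0_iff)
  have phi0: "\<phi> \<ge> 0"
  proof -
    obtain e where "e \<in> E" using False by auto
    then show ?thesis using dens unfolding bounded_density_def by (meson order_trans)
  qed
  define MV where "MV = Mv E k R"
  have finMV: "finite MV" and cardMV: "card MV \<le> k * m ^ k * 2 ^ B"
    using card_Mv[OF E RE RB] by (auto simp: MV_def m_def)
  define S where "S = (\<lambda>(mv::'e set \<times> 'e set) (t::nat). {w \<in> space ?P. 0 < Lf (fst mv) (snd mv) w \<and> Lf (fst mv) (snd mv) w \<le> real m / real t})"
  define Bt where "Bt = (\<lambda>t. \<Union>mv\<in>MV. S mv t)"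
  have MVsub: "mv \<in> MV \<Longrightarrow> fst mv \<subseteq> E \<and> snd mv \<subseteq> E \<and> fst mv \<noteq> {} \<and> fst mv \<inter> snd mv = {}" for mv
    unfolding MV_def Mv_def by (auto; meson RE subsetD)
  have Ssets: "S mv t \<in> sets ?P" if "mv \<in> MV" for mv t
  proof -
    have "Lf (fst mv) (snd mv) \<in> borel_measurable ?P" using MVsub[OF that] by (intro Lf_meas) auto
    then show ?thesis unfolding S_def by measurable
  qed
  have Bsets: "Bt t \<in> sets ?P" for t
    unfolding Bt_def using finMV Ssets by (intro sets.finite_UN) auto
  have point: "max_iterations Tours k w \<le> (\<Sum>t\<in>{1..2^m}. indicator (Bt t) w)"
    if wsp: "w \<in> space ?P" and good: "\<forall>e\<in>E. 0 \<le> w e \<and> w e \<le> 1" for w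
    unfolding max_iterations_def
  proof (rule SUP_least)
    fix ts assume "ts \<in> {ts. improving_seq Tours k w ts}"
    then have seq: "improving_seq Tours k w ts" by simp
    define L where "L = length ts - 1"
    have Lm: "L \<le> 2 ^ m" using seq_len[OF seq TE E] by (simp add: L_def m_def)
    have cb: "\<forall>T\<in>Tours. 0 \<le> tour_cost w T \<and> tour_cost w T \<le> real m"
    proof
      fix T assume "T \<in> Tours"
      then have TE': "T \<subseteq> E" using TE by auto
      have "0 \<le> tour_cost w T" unfolding tour_cost_def using good TE' by (intro sum_nonneg) auto
      moreover have "tour_cost w T \<le> real (card T) * 1"
        unfolding tour_cost_def using good TE' by (intro sum_bounded_above) auto
      moreover have "card T \<le> m" unfolding m_def using TE' E by (rule card_mono[rotated])
      ultimately show "0 \<le> tour_cost w T \<and> tour_cost w T \<le> real m" by simp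
    qed
    have inB: "w \<in> Bt t" if t: "t \<in> {1..L}" for t
    proof -
      obtain i where i: "Suc i < length ts" and le: "tour_cost w (ts!i) - tour_cost w (ts!Suc i) \<le> real m / real t"
        using small_step[OF seq cb, of t] t L_def by auto
      define T where "T = ts!i"
      define T' where "T' = ts!Suc i"
      have nb: "kopt_neighbour Tours k T T'" and lt: "tour_cost w T' < tour_cost w T"
        using seq i unfolding improving_seq_def T_def T'_def by auto
      obtain r where r: "r \<in> {2..k}" "card (T - T') = r" and TT: "T \<in> Tours" "T' \<in> Tours"
        using nb unfolding kopt_neighbour_def by auto
      have fT: "finite T" "finite T'" using TT TE E finite_subset by blast+
      have ne: "T - T' \<noteq> {}" using r by (metis atLeastAtMost_iff card.empty not_numeral_le_zero)
      have mv: "(T - T', T' - T) \<in> MV"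
        unfolding MV_def Mv_def using r TT TE RN[OF nb] ne by auto
      have "Lf (T - T') (T' - T) w = tour_cost w T - tour_cost w T'"
        using cost_diff[OF fT] by simp
      then have "w \<in> S (T - T', T' - T) t" unfolding S_def using wsp lt le T_def T'_def by auto
      then show ?thesis unfolding Bt_def using mv by auto
    qed
    have "of_nat (length ts - 1) = (\<Sum>t\<in>{1..L}. indicator (Bt t) w :: ennreal)"
      using inB by (simp add: L_def)
    also have "\<dots> \<le> (\<Sum>t\<in>{1..2^m}. indicator (Bt t) w)"
      using Lm by (intro sum_mono2) auto
    finally show "of_nat (length ts - 1) \<le> (\<Sum>t\<in>{1..2^m}. indicator (Bt t) w :: ennreal)" .
  qed
  have "(\<integral>\<^sup>+ w. max_iterations Tours k w \<partial>?P) \<le> (\<integral>\<^sup>+ w. (\<Sum>t\<in>{1..2^m}. indicator (Bt t) w) \<partial>?P)"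
  proof (rule nn_integral_mono_AE)
    show "AE w in ?P. max_iterations Tours k w \<le> (\<Sum>t\<in>{1..2^m}. indicator (Bt t) w)"
      using AE_good[OF E dens] AE_space by eventually_elim (rule point)
  qed
  also have "\<dots> = (\<Sum>t\<in>{1..2^m}. emeasure ?P (Bt t))"
    using Bsets by (subst nn_integral_sum) auto
  also have "\<dots> \<le> (\<Sum>t\<in>{1..2^m}. ennreal (real (card MV) * \<phi> * real m * (1 / real t)))"
  proof (rule sum_mono)
    fix t :: nat assume t: "t \<in> {1..2^m}"
    have "emeasure ?P (Bt t) \<le> (\<Sum>mv\<in>MV. emeasure ?P (S mv t))"
      unfolding Bt_def using finMV Ssets by (intro emeasure_subadditive_finite) auto
    also have "\<dots> \<le> (\<Sum>mv\<in>MV. ennreal (\<phi> * (real m / real t)))"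
    proof (rule sum_mono)
      fix mv assume mv: "mv \<in> MV"
      show "emeasure ?P (S mv t) \<le> ennreal (\<phi> * (real m / real t))"
        unfolding S_def using MVsub[OF mv] by (intro move_prob[OF E dens]) auto
    qed
    also have "\<dots> = ennreal (real (card MV) * \<phi> * real m * (1 / real t))"
      using phi0 by (simp add: ennreal_of_nat_eq_real_of_nat ennreal_mult[symmetric])
    finally show "emeasure ?P (Bt t) \<le> ennreal (real (card MV) * \<phi> * real m * (1 / real t))" .
  qed
  also have "\<dots> = ennreal (real (card MV) * \<phi> * real m * (\<Sum>t\<in>{1..2^m}. 1 / real t))"
    using phi0 by (subst sum_ennreal) (auto simp: sum_distrib_left)
  also have "\<dots> \<le> ennreal (2 * real k * 2 ^ B * real (card E) ^ (k + 2) * \<phi>)"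
  proof (rule ennreal_leI)
    have H: "(\<Sum>t\<in>{1..(2::nat)^m}. 1 / real t) \<le> 2 * real m" using harm_pow2[of m] m1 by simp
    have C: "real (card MV) \<le> real k * real m ^ k * 2 ^ B" 
    proof -
      have "real (card MV) \<le> real (k * m ^ k * 2 ^ B)" using cardMV by (rule of_nat_mono)
      then show ?thesis by simp
    qed
    have "real (card MV) * \<phi> * real m * (\<Sum>t\<in>{1..2^m}. 1 / real t)
        \<le> (real k * real m ^ k * 2 ^ B) * \<phi> * real m * (2 * real m)"
      using H C phi0 by (intro mult_mono) (auto intro: sum_nonneg)
    also have "\<dots> = 2 * real k * 2 ^ B * real (card E) ^ (k + 2) * \<phi>"
      by (simp add: m_def power_add power2_eq_square)
    finally show "real (card MV) * \<phi> * real m * (\<Sum>t\<in>{1..2^m}. 1 / real t) \<le> 2 * real k * 2 ^ B * real (card E) ^ (k + 2) * \<phi>" .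
  qed
  finally show ?thesis .
qed



lemma pm_mod: "j < (n::nat) \<Longrightarrow> (j+n-1) mod n = (if j=0 then n-1 else j-1)"
proof (cases "j = 0")
  case True
  assume "j < n" then show ?thesis using True by simp
next
  case False
  assume j: "j < n"
  then have "j + n - 1 = (j - 1) + n" using False by simp
  then have "(j+n-1) mod n = (j - 1) mod n" by simp
  also have "\<dots> = j - 1" using j by simp
  finally show ?thesis using False by simp
qed

lemma sc_mod: "j < (n::nat) \<Longrightarrow> Suc j mod n = (if Suc j = n then 0 else Suc j)"
  by (simp add: mod_Suc)

lemma A1: assumes "j < (n::nat)" shows "Suc ((j+n-1) mod n) mod n = j"
proof (cases "j = 0")
  case True
  then have "Suc ((j+n-1) mod n) = n" using assms pm_mod[OF assms] by simp
  then show ?thesis using True by simp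
next
  case False
  then have "Suc ((j+n-1) mod n) = j" using assms pm_mod[OF assms] by simp
  then show ?thesis using assms by simp
qed

lemma A2: assumes "i < (n::nat)" "j < n" "Suc i mod n = j" shows "i = (j+n-1) mod n"
  using assms(3) unfolding pm_mod[OF assms(2)] sc_mod[OF assms(1)] using assms by (auto split: if_splits)

lemma A3: assumes "3 \<le> (n::nat)" "j < n" shows "Suc j mod n \<noteq> (j+n-1) mod n"
  unfolding pm_mod[OF assms(2)] sc_mod[OF assms(2)] using assms by auto

lemma A4: "2 \<le> (n::nat) \<Longrightarrow> j < n \<Longrightarrow> Suc j mod n \<noteq> j"
  by (auto simp: sc_mod)

lemma tsp_degree:
  assumes T: "T \<in> tsp_tours V E" and v: "v \<in> V"
  shows "\<exists>a b. a \<noteq> b \<and> {e\<in>T. v \<in> e} = {a, b}"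
proof -
  obtain vs where vs: "distinct vs" "set vs = V" "length vs \<ge> 3"
    and Tdef: "T = {{vs ! i, vs ! (Suc i mod length vs)} | i. i < length vs}"
    using T unfolding tsp_tours_def by blast
  define n where "n = length vs"
  define s where "s = (\<lambda>i. Suc i mod n)"
  have n3: "n \<ge> 3" using vs n_def by simp
  have "v \<in> set vs" using v vs by simp
  then obtain j where j: "j < n" "vs ! j = v" unfolding n_def in_set_conv_nth by blast
  define p where "p = (j+n-1) mod n"
  have p: "p < n" "s p = j" using j n3 A1[of j n] by (auto simp: p_def s_def)
  have sj: "s j < n" using j by (simp add: s_def)
  define a where "a = {vs!j, vs!(s j)}"
  define b where "b = {vs!p, vs!(s p)}"
  have inj: "\<And>x y. x < n \<Longrightarrow> y < n \<Longrightarrow> vs!x = vs!y \<longleftrightarrow> x = y"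
    using vs(1) by (simp add: n_def nth_eq_iff_index_eq)
  have ab: "a \<noteq> b"
  proof
    assume "a = b"
    then have eq: "{vs!j, vs!(s j)} = {vs!p, vs!j}" using p by (simp add: a_def b_def)
    have ne: "vs!(s j) \<noteq> vs!j" using inj[OF sj j(1)] A4[of n j] n3 j by (simp add: s_def)
    have "vs!(s j) \<in> {vs!p, vs!j}" using eq by (metis insertCI)
    then have "vs!(s j) = vs!p" using ne by simp
    then have "s j = p" using inj[OF sj p(1)] by simp
    then show False using A3[of n j] n3 j by (simp add: s_def p_def)
  qed
  have "{e\<in>T. v \<in> e} = {a, b}"
  proof
    show "{e\<in>T. v \<in> e} \<subseteq> {a, b}"
    proof
      fix e assume "e \<in> {e\<in>T. v \<in> e}"
      then have "e \<in> T" "v \<in> e" by auto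
      then obtain i where i: "i < n" "e = {vs!i, vs!(s i)}"
        unfolding Tdef n_def s_def by auto
      note i = i \<open>v \<in> e\<close>
      have si: "s i < n" using i by (simp add: s_def)
      show "e \<in> {a, b}"
      proof (cases "vs!i = v")
        case True then have "i = j" using inj[OF i(1) j(1)] j by simp
        then show ?thesis using i by (simp add: a_def)
      next
        case False then have "vs!(s i) = vs!j" using i j by auto
        then have "s i = j" using inj[OF si j(1)] by simp
        then have "i = p" using A2[of i n j] i j by (simp add: s_def p_def)
        then show ?thesis using i by (simp add: b_def)
      qed
    qed
    show "{a, b} \<subseteq> {e\<in>T. v \<in> e}"
    proof -
      have "a \<in> T" unfolding Tdef
      proof (intro CollectI exI[of _ j] conjI)
        show "a = {vs!j, vs!(Suc j mod length vs)}" by (simp add: a_def s_def n_def)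
        show "j < length vs" using j n_def by simp
      qed
      moreover have "b \<in> T" unfolding Tdef
      proof (intro CollectI exI[of _ p] conjI)
        show "b = {vs!p, vs!(Suc p mod length vs)}" by (simp add: b_def s_def n_def)
        show "p < length vs" using p n_def by simp
      qed
      moreover have "v \<in> a" "v \<in> b" using j p by (auto simp: a_def b_def)
      ultimately show ?thesis by auto
    qed
  qed
  then show ?thesis using ab by blast
qed

lemma tsp_RN:
  assumes nb: "kopt_neighbour (tsp_tours V E) k T T'" and EV: "\<forall>e\<in>E. e \<subseteq> V \<and> card e = 2"
  shows "T' - T \<subseteq> {e\<in>E. e \<subseteq> \<Union>(T - T')}"
proof
  fix y assume y: "y \<in> T' - T"
  have TT: "T \<in> tsp_tours V E" "T' \<in> tsp_tours V E" using nb unfolding kopt_neighbour_def by auto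
  have yE: "y \<in> E" using y TT(2) unfolding tsp_tours_def by auto
  have "v \<in> \<Union>(T - T')" if v: "v \<in> y" for v
  proof (rule ccontr)
    assume nv: "v \<notin> \<Union>(T - T')"
    have vV: "v \<in> V" using v yE EV by auto
    obtain a b where ab: "a \<noteq> b" "{e\<in>T. v \<in> e} = {a, b}" using tsp_degree[OF TT(1) vV] by blast
    obtain c d where cd: "c \<noteq> d" "{e\<in>T'. v \<in> e} = {c, d}" using tsp_degree[OF TT(2) vV] by blast
    have "a \<in> T" "b \<in> T" "v \<in> a" "v \<in> b" using ab by blast+
    then have "a \<in> T'" "b \<in> T'" using nv by auto
    then have "a \<in> {c,d}" "b \<in> {c,d}" using \<open>v \<in> a\<close> \<open>v \<in> b\<close> cd by blast+
    then have "{a,b} = {c,d}" using ab(1) by auto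
    moreover have "y \<in> {c,d}" using y v cd by blast
    ultimately have "y \<in> T" using ab by blast
    then show False using y by simp
  qed
  then show "y \<in> {e\<in>E. e \<subseteq> \<Union>(T - T')}" using yE by auto
qed



lemma atsp_struct:
  assumes T: "T \<in> atsp_tours V A"
  shows "\<forall>u\<in>V. \<exists>x\<in>T. fst x = u" "\<forall>u\<in>V. \<exists>x\<in>T. snd x = u"
    "\<forall>x\<in>T. \<forall>x'\<in>T. fst x = fst x' \<longrightarrow> x = x'" "\<forall>x\<in>T. \<forall>x'\<in>T. snd x = snd x' \<longrightarrow> x = x'"
proof -
  obtain vs where vs: "distinct vs" "set vs = V" "length vs \<ge> 2"
    and Tdef: "T = {(vs ! i, vs ! (Suc i mod length vs)) | i. i < length vs}"
    using T unfolding atsp_tours_def by blast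
  define n where "n = length vs"
  define s where "s = (\<lambda>i. Suc i mod n)"
  have n2: "n \<ge> 2" using vs n_def by simp
  have Tn: "T = {(vs ! i, vs ! (s i)) | i. i < n}" unfolding Tdef s_def n_def ..
  have inj: "\<And>x y. x < n \<Longrightarrow> y < n \<Longrightarrow> vs!x = vs!y \<longleftrightarrow> x = y"
    using vs(1) by (simp add: n_def nth_eq_iff_index_eq)
  have sl: "\<And>i. i < n \<Longrightarrow> s i < n" using n2 by (simp add: s_def)
  have mem: "\<And>i. i < n \<Longrightarrow> (vs ! i, vs ! (s i)) \<in> T" unfolding Tn by blast
  have idx: "\<And>u. u \<in> V \<Longrightarrow> \<exists>j<n. vs ! j = u" using vs(2) unfolding n_def
    by (metis in_set_conv_nth)
  show "\<forall>u\<in>V. \<exists>x\<in>T. fst x = u"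
  proof
    fix u assume "u \<in> V"
    then obtain j where j: "j < n" "vs!j = u" using idx by blast
    show "\<exists>x\<in>T. fst x = u" using mem[OF j(1)] j by force
  qed
  show "\<forall>u\<in>V. \<exists>x\<in>T. snd x = u"
  proof
    fix u assume "u \<in> V"
    then obtain j where j: "j < n" "vs!j = u" using idx by blast
    define p where "p = (j+n-1) mod n"
    have p: "p < n" "s p = j" using j n2 A1[of j n] by (auto simp: p_def s_def)
    show "\<exists>x\<in>T. snd x = u" using mem[OF p(1)] j p by force
  qed
  show "\<forall>x\<in>T. \<forall>x'\<in>T. fst x = fst x' \<longrightarrow> x = x'"
  proof (intro ballI impI)
    fix x x' assume "x \<in> T" "x' \<in> T" and eq: "fst x = fst x'"
    obtain i where i: "i < n" "x = (vs ! i, vs ! (s i))" using \<open>x \<in> T\<close> unfolding Tn by blast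
    obtain i' where i': "i' < n" "x' = (vs ! i', vs ! (s i'))" using \<open>x' \<in> T\<close> unfolding Tn by blast
    have "i = i'" using eq i i' inj by simp
    then show "x = x'" using i i' by simp
  qed
  show "\<forall>x\<in>T. \<forall>x'\<in>T. snd x = snd x' \<longrightarrow> x = x'"
  proof (intro ballI impI)
    fix x x' assume "x \<in> T" "x' \<in> T" and eq: "snd x = snd x'"
    obtain i where i: "i < n" "x = (vs ! i, vs ! (s i))" using \<open>x \<in> T\<close> unfolding Tn by blast
    obtain i' where i': "i' < n" "x' = (vs ! i', vs ! (s i'))" using \<open>x' \<in> T\<close> unfolding Tn by blast
    have "s i = s i'" using eq i i' inj sl by simp
    have e1: "i = (s i + n - 1) mod n"
      by (rule A2) (use i(1) sl[OF i(1)] in \<open>simp_all add: s_def\<close>)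
    have e2: "i' = (s i' + n - 1) mod n"
      by (rule A2) (use i'(1) sl[OF i'(1)] in \<open>simp_all add: s_def\<close>)
    have "i = i'" using e1 e2 \<open>s i = s i'\<close> by metis
    then show "x = x'" using i i' by simp
  qed
qed

lemma atsp_RN:
  assumes nb: "kopt_neighbour (atsp_tours V A) k T T'"
    and AV: "\<forall>a\<in>A. fst a \<in> V \<and> snd a \<in> V \<and> fst a \<noteq> snd a"
  shows "T' - T \<subseteq> {a\<in>A. fst a \<in> fst ` (T - T') \<and> snd a \<in> snd ` (T - T')}"
proof
  fix y assume y: "y \<in> T' - T"
  have TT: "T \<in> atsp_tours V A" "T' \<in> atsp_tours V A" using nb unfolding kopt_neighbour_def by auto
  have yA: "y \<in> A" using y TT(2) unfolding atsp_tours_def by auto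
  note S = atsp_struct[OF TT(1)] and S' = atsp_struct[OF TT(2)]
  have "fst y \<in> V" "snd y \<in> V" using yA AV by auto
  obtain x where x: "x \<in> T" "fst x = fst y" using S(1) \<open>fst y \<in> V\<close> by blast
  have "x \<notin> T'"
  proof
    assume "x \<in> T'" then have "x = y" using S'(3) y x by auto
    then show False using x y by simp
  qed
  then have "fst y \<in> fst ` (T - T')" using x by (metis Diff_iff image_eqI)
  obtain z where z: "z \<in> T" "snd z = snd y" using S(2) \<open>snd y \<in> V\<close> by blast
  have "z \<notin> T'"
  proof
    assume "z \<in> T'" then have "z = y" using S'(4) y z by auto
    then show False using z y by simp
  qed
  then have "snd y \<in> snd ` (T - T')" using z by (metis Diff_iff image_eqI)
  then show "y \<in> {a\<in>A. fst a \<in> fst ` (T - T') \<and> snd a \<in> snd ` (T - T')}"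
    using yA \<open>fst y \<in> fst ` (T - T')\<close> by simp
qed

lemma choose2_mono: "(a::nat) \<le> b \<Longrightarrow> a choose 2 \<le> b choose 2"
  unfolding choose_two by (intro div_le_mono mult_le_mono) auto

lemma tsp_RB:
  assumes E: "finite E" and EV: "\<forall>e\<in>E. card e = 2" and X: "X \<subseteq> E" "card X \<le> k"
  shows "card {e\<in>E. e \<subseteq> \<Union>X} \<le> (2*k) choose 2"
proof -
  have fX: "finite X" using X E finite_subset by blast
  have fe: "\<And>e. e \<in> X \<Longrightarrow> finite e" using X EV card.infinite by fastforce
  have fU: "finite (\<Union>X)" using fX fe by blast
  have "card {e\<in>E. e \<subseteq> \<Union>X} \<le> card {e. e \<subseteq> \<Union>X \<and> card e = 2}"
    using EV fU by (intro card_mono) (auto intro: finite_subset[of _ "Pow (\<Union>X)"])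
  also have "\<dots> = card (\<Union>X) choose 2" using fU by (rule n_subsets)
  also have "\<dots> \<le> (2*k) choose 2"
  proof (rule choose2_mono)
    have "card (\<Union>X) \<le> sum card X" by (rule card_Union_le_sum_card)
    also have "\<dots> = sum (\<lambda>_. 2) X" using X EV by (intro sum.cong) auto
    also have "\<dots> = 2 * card X" by simp
    also have "\<dots> \<le> 2 * k" using X by simp
    finally show "card (\<Union>X) \<le> 2 * k" .
  qed
  finally show ?thesis .
qed

lemma atsp_RB:
  assumes X: "card X \<le> k" "finite X"
  shows "card {a\<in>A. fst a \<in> fst ` X \<and> snd a \<in> snd ` X} \<le> k * k"
proof -
  have "card {a\<in>A. fst a \<in> fst ` X \<and> snd a \<in> snd ` X} \<le> card (fst ` X \<times> snd ` X)"
  proof (rule card_mono)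
    show "finite (fst ` X \<times> snd ` X)" using X by simp
    show "{a\<in>A. fst a \<in> fst ` X \<and> snd a \<in> snd ` X} \<subseteq> fst ` X \<times> snd ` X"
      unfolding subset_iff mem_Times_iff by blast
  qed
  also have "\<dots> = card (fst ` X) * card (snd ` X)" by (simp add: card_cartesian_product)
  also have "\<dots> \<le> card X * card X" by (intro mult_le_mono card_image_le X)
  also have "\<dots> \<le> k * k" using X by (intro mult_le_mono) auto
  finally show ?thesis .
qed

lemma num_tsp: "1 \<le> k \<Longrightarrow> k * 2 ^ ((2*k) choose 2) \<le> (4::nat) ^ (k^2)"
proof -
  assume k: "1 \<le> k"
  have c: "((2*k) choose 2) + k = 2 * k^2"
  proof -
    have "(2*k) choose 2 = (2*k) * (2*k-1) div 2" by (rule choose_two)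
    also have "(2*k) * (2*k-1) = 2 * (k * (2*k-1))" by simp
    finally have c1: "(2*k) choose 2 = k * (2*k-1)" by simp
    have "k * (2*k-1) + k = 2 * k^2" using k by (cases k) (simp_all add: power2_eq_square algebra_simps)
    then show ?thesis unfolding c1 .
  qed
  have "k * 2 ^ ((2*k) choose 2) \<le> 2 ^ k * 2 ^ ((2*k) choose 2)"
    using less_exp[of k] by simp
  also have "\<dots> = 2 ^ (2 * k^2)" by (simp add: c[symmetric] power_add)
  also have "\<dots> = 4 ^ (k^2)" by (simp add: power_mult)
  finally show ?thesis .
qed

lemma num_atsp: "k * 2 ^ (k*k) \<le> (4::nat) ^ (k^2)"
proof -
  have "k * 2 ^ (k*k) \<le> 2 ^ k * 2 ^ (k*k)" using less_exp[of k] by simp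
  also have "\<dots> = 2 ^ (k + k*k)" by (simp add: power_add)
  also have "\<dots> \<le> 2 ^ (2 * k^2)" by (intro power_increasing) (auto simp: power2_eq_square)
  also have "\<dots> = 4 ^ (k^2)" by (simp add: power_mult)
  finally show ?thesis .
qed

lemma fin_num:
  assumes kb: "k * 2 ^ B \<le> (4::nat) ^ (k^2)" and M: "M \<ge> 0"
  shows "ennreal (2 * real k * 2 ^ B * M * \<phi>) \<le> ennreal (2 * 4 ^ (k^2) * M * \<phi>)"
proof (cases "\<phi> \<ge> 0")
  case True
  have "real (k * 2 ^ B) \<le> real ((4::nat) ^ (k^2))" using kb by (simp only: of_nat_le_iff)
  then have r: "real k * 2 ^ B \<le> (4::real) ^ (k^2)" by simp
  show ?thesis
  proof (rule ennreal_leI)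
    have "2 * (real k * 2 ^ B) * (M * \<phi>) \<le> 2 * 4 ^ (k^2) * (M * \<phi>)"
      using r M True by (intro mult_right_mono) (auto)
    then show "2 * real k * 2 ^ B * M * \<phi> \<le> 2 * 4 ^ (k^2) * M * \<phi>" by (simp add: mult.assoc)
  qed
next
  case False
  have "2 * real k * 2 ^ B * M * \<phi> \<le> 0"
    using False M by (intro mult_nonneg_nonpos) auto
  then have "ennreal (2 * real k * 2 ^ B * M * \<phi>) = 0" by (simp add: ennreal_eq_0_iff)
  then show ?thesis by simp
qed

theorem mainTheorem8:
  shows "\<exists>C::real. C > 0 \<and>
    (\<forall>(k::nat) (V::nat set) (E::nat set set) (\<phi>::real) (f::nat set \<Rightarrow> real \<Rightarrow> real).
       k \<ge> 2 \<longrightarrow> finite V \<longrightarrow> (\<forall>e\<in>E. e \<subseteq> V \<and> card e = 2) \<longrightarrow>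
       (\<forall>e\<in>E. bounded_density \<phi> (f e)) \<longrightarrow>
       (\<integral>\<^sup>+ w. max_iterations (tsp_tours V E) k w \<partial>weight_measure E f)
         \<le> ennreal (C * 4 ^ (k\<^sup>2) * real (card E) ^ (k + 2) * \<phi>)) \<and>
    (\<forall>(k::nat) (V::nat set) (A::(nat \<times> nat) set) (\<phi>::real) (f::nat \<times> nat \<Rightarrow> real \<Rightarrow> real).
       k \<ge> 2 \<longrightarrow> finite V \<longrightarrow> (\<forall>a\<in>A. fst a \<in> V \<and> snd a \<in> V \<and> fst a \<noteq> snd a) \<longrightarrow>
       (\<forall>a\<in>A. bounded_density \<phi> (f a)) \<longrightarrow>
       (\<integral>\<^sup>+ w. max_iterations (atsp_tours V A) k w \<partial>weight_measure A f)
         \<le> ennreal (C * 4 ^ (k\<^sup>2) * real (card A) ^ (k + 2) * \<phi>))"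
proof (intro exI[of _ 2] conjI allI impI)
  show "(2::real) > 0" by simp
next
  fix k :: nat and V :: "nat set" and E :: "nat set set" and \<phi> :: real and f :: "nat set \<Rightarrow> real \<Rightarrow> real"
  assume k: "k \<ge> 2" and V: "finite V" and EV: "\<forall>e\<in>E. e \<subseteq> V \<and> card e = 2"
    and dens: "\<forall>e\<in>E. bounded_density \<phi> (f e)"
  have E: "finite E" using V EV by (intro finite_subset[of E "Pow V"]) auto
  have "(\<integral>\<^sup>+ w. max_iterations (tsp_tours V E) k w \<partial>weight_measure E f)
      \<le> ennreal (2 * real k * 2 ^ ((2*k) choose 2) * real (card E) ^ (k + 2) * \<phi>)"
  proof (rule generic[where R = "\<lambda>X. {e\<in>E. e \<subseteq> \<Union>X}"])
    show "finite E" by (rule E)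
    show "tsp_tours V E \<subseteq> Pow E" unfolding tsp_tours_def by auto
    show "\<forall>e\<in>E. bounded_density \<phi> (f e)" by (rule dens)
    show "\<And>X. X \<subseteq> E \<Longrightarrow> {e\<in>E. e \<subseteq> \<Union>X} \<subseteq> E" by auto
    show "\<And>X. X \<subseteq> E \<Longrightarrow> card X \<le> k \<Longrightarrow> card {e\<in>E. e \<subseteq> \<Union>X} \<le> (2*k) choose 2"
      using E EV by (intro tsp_RB) auto
    show "\<And>T T'. kopt_neighbour (tsp_tours V E) k T T' \<Longrightarrow> T' - T \<subseteq> {e\<in>E. e \<subseteq> \<Union>(T - T')}"
      using EV by (intro tsp_RN) auto
  qed
  also have "\<dots> \<le> ennreal (2 * 4 ^ (k\<^sup>2) * real (card E) ^ (k + 2) * \<phi>)"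
    using k by (intro fin_num num_tsp) auto
  finally show "(\<integral>\<^sup>+ w. max_iterations (tsp_tours V E) k w \<partial>weight_measure E f)
         \<le> ennreal (2 * 4 ^ (k\<^sup>2) * real (card E) ^ (k + 2) * \<phi>)" .
next
  fix k :: nat and V :: "nat set" and A :: "(nat \<times> nat) set" and \<phi> :: real and f :: "nat \<times> nat \<Rightarrow> real \<Rightarrow> real"
  assume k: "k \<ge> 2" and V: "finite V" and AV: "\<forall>a\<in>A. fst a \<in> V \<and> snd a \<in> V \<and> fst a \<noteq> snd a"
    and dens: "\<forall>a\<in>A. bounded_density \<phi> (f a)"
  have A: "finite A" using V AV by (intro finite_subset[of A "V \<times> V"]) (auto simp: mem_Times_iff)
  have "(\<integral>\<^sup>+ w. max_iterations (atsp_tours V A) k w \<partial>weight_measure A f)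
      \<le> ennreal (2 * real k * 2 ^ (k * k) * real (card A) ^ (k + 2) * \<phi>)"
  proof (rule generic[where R = "\<lambda>X. {a\<in>A. fst a \<in> fst ` X \<and> snd a \<in> snd ` X}"])
    show "finite A" by (rule A)
    show "atsp_tours V A \<subseteq> Pow A" unfolding atsp_tours_def by auto
    show "\<forall>e\<in>A. bounded_density \<phi> (f e)" by (rule dens)
    show "\<And>X. X \<subseteq> A \<Longrightarrow> {a\<in>A. fst a \<in> fst ` X \<and> snd a \<in> snd ` X} \<subseteq> A" by auto
    show "\<And>X. X \<subseteq> A \<Longrightarrow> card X \<le> k \<Longrightarrow> card {a\<in>A. fst a \<in> fst ` X \<and> snd a \<in> snd ` X} \<le> k * k"
      using A by (intro atsp_RB) (auto intro: finite_subset)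
    show "\<And>T T'. kopt_neighbour (atsp_tours V A) k T T' \<Longrightarrow> T' - T \<subseteq> {a\<in>A. fst a \<in> fst ` (T - T') \<and> snd a \<in> snd ` (T - T')}"
      using AV by (intro atsp_RN) auto
  qed
  also have "\<dots> \<le> ennreal (2 * 4 ^ (k\<^sup>2) * real (card A) ^ (k + 2) * \<phi>)"
    by (intro fin_num num_atsp) auto
  finally show "(\<integral>\<^sup>+ w. max_iterations (atsp_tours V A) k w \<partial>weight_measure A f)
         \<le> ennreal (2 * 4 ^ (k\<^sup>2) * real (card A) ^ (k + 2) * \<phi>)" .
qed

end
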